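(* Let $n\ge1$, $m=2n$, let $\delta_1,\delta_2>0$, and for $k,k'\in\{1,2\}$ let $\hat g_{k,k'}(u)=\int_{[0,\infty)}e^{-uz}\,dG_{k,k'}(z)$ be the Laplace transform of a probability distribution $G_{k,k'}$ on $[0,\infty)$. For $(v_1,\ldots,v_m)\in\mathbb{R}_+^m$ define functions $l_1,\ldots,l_m$ on $[0,\infty)$ by $l_1(t)=v_{2n}e^{-\delta_2 t}$, $l_2(t)=v_{2n-1}e^{-\delta_1 t}$, and for $k=1,\ldots,n-1$, $$l_{2k+1}(t)=v_{2(n-k)}e^{-\delta_2 t}+e^{-\delta_2 t}\int_0^t e^{\delta_2 s}\big[1-\hat g_{1,2}(l_{2k}(s))+1-\hat g_{2,2}(l_{2k-1}(s))\big]ds,$$ $$l_{2k+2}(t)=v_{2(n-k)-1}e^{-\delta_1 t}+e^{-\delta_1 t}\int_0^t e^{\delta_1 s}\big[1-\hat g_{1,1}(l_{2k}(s))+1-\hat g_{2,1}(l_{2k-1}(s))\big]ds.$$ Then for every $i=1,\ldots,m$ and every $(v_1,\ldots,v_m)\in\mathbb{R}_+^m$, $\lim_{t\to\infty}l_i(t)=0$.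
   Context: These functions are the (unique) solution of the forward ODE system $\dot l_1+\delta_2 l_1=0$, $\dot l_2+\delta_1 l_2=0$, $\dot l_{2k+1}+\delta_2 l_{2k+1}-(1-\hat g_{1,2}(l_{2k}))-(1-\hat g_{2,2}(l_{2k-1}))=0$, $\dot l_{2k+2}+\delta_1 l_{2k+2}-(1-\hat g_{1,1}(l_{2k}))-(1-\hat g_{2,1}(l_{2k-1}))=0$ with the stated initial values. *)

theory Defs
  imports "HOL-Probability.Probability"
begin

text \<open>A probability distribution on [0,\<infinity>), represented as a probability measure on the
Borel sets of the reals giving no mass to (-\<infinity>,0).\<close>
definition prob_dist_nonneg :: "real measure \<Rightarrow> bool" where
  "prob_dist_nonneg G \<longleftrightarrow> prob_space G \<and> sets G = sets borel \<and> measure G {..<0} = 0"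

definition laplace :: "real measure \<Rightarrow> real \<Rightarrow> real" where
  "laplace G u = (\<integral>z. exp (- u * z) \<partial>G)"

text \<open>lpair n v d1 d2 g11 g12 g21 g22 k = (l_{2k+1}, l_{2k+2}); v is indexed 1..2n.\<close>
fun lpair :: "nat \<Rightarrow> (nat \<Rightarrow> real) \<Rightarrow> real \<Rightarrow> real \<Rightarrow>
    (real \<Rightarrow> real) \<Rightarrow> (real \<Rightarrow> real) \<Rightarrow> (real \<Rightarrow> real) \<Rightarrow> (real \<Rightarrow> real) \<Rightarrow>
    nat \<Rightarrow> (real \<Rightarrow> real) \<times> (real \<Rightarrow> real)" where
  "lpair n v d1 d2 g11 g12 g21 g22 0 =
     ((\<lambda>t. v (2*n) * exp (- d2 * t)), (\<lambda>t. v (2*n - 1) * exp (- d1 * t)))"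
| "lpair n v d1 d2 g11 g12 g21 g22 (Suc k) =
     (let a = fst (lpair n v d1 d2 g11 g12 g21 g22 k);
          b = snd (lpair n v d1 d2 g11 g12 g21 g22 k)
      in ((\<lambda>t. v (2*(n - Suc k)) * exp (- d2 * t) + exp (- d2 * t) *
               integral {0..t} (\<lambda>s. exp (d2 * s) * ((1 - g12 (b s)) + (1 - g22 (a s))))),
          (\<lambda>t. v (2*(n - Suc k) - 1) * exp (- d1 * t) + exp (- d1 * t) *
               integral {0..t} (\<lambda>s. exp (d1 * s) * ((1 - g11 (b s)) + (1 - g21 (a s)))))))"

definition lfun :: "nat \<Rightarrow> (nat \<Rightarrow> real) \<Rightarrow> real \<Rightarrow> real \<Rightarrow>
    (real \<Rightarrow> real) \<Rightarrow> (real \<Rightarrow> real) \<Rightarrow> (real \<Rightarrow> real) \<Rightarrow> (real \<Rightarrow> real) \<Rightarrow>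
    nat \<Rightarrow> real \<Rightarrow> real" where
  "lfun n v d1 d2 g11 g12 g21 g22 i =
     (if odd i then fst (lpair n v d1 d2 g11 g12 g21 g22 ((i - 1) div 2))
      else snd (lpair n v d1 d2 g11 g12 g21 g22 ((i - 2) div 2)))"

end

theory Submission imports Defs begin

lemma pdn_facts:
  assumes "prob_dist_nonneg G"
  shows "prob_space G" "space G = UNIV" "AE z in G. 0 \<le> z"
    "\<And>f::real\<Rightarrow>real. f \<in> borel_measurable borel \<Longrightarrow> f \<in> borel_measurable G"
proof -
  have ps: "prob_space G" and s: "sets G = sets borel" and m: "measure G {..<0} = 0"
    using assms unfolding prob_dist_nonneg_def by auto
  show "prob_space G" by fact
  show sp: "space G = UNIV" using sets_eq_imp_space_eq[OF s] by simp
  show "f \<in> borel_measurable G" if "f \<in> borel_measurable borel" for f :: "real \<Rightarrow> real"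
    using that measurable_cong_sets[OF s refl] by blast
  have "{..<0::real} \<in> sets G" using s by simp
  then have "emeasure G {..<0} = 0" using m ps
    by (simp add: finite_measure.emeasure_eq_measure prob_space.finite_measure)
  then have "{..<0::real} \<in> null_sets G" using \<open>{..<0::real} \<in> sets G\<close> by auto
  then show "AE z in G. 0 \<le> z"
    by (rule AE_I') (auto simp: sp)
qed

lemma laplace_bounds:
  assumes "prob_dist_nonneg G" "0 \<le> u"
  shows "0 \<le> laplace G u" "laplace G u \<le> 1"
proof -
  note f = pdn_facts[OF assms(1)]
  interpret prob_space G by fact
  have meas: "(\<lambda>z. exp (- u * z)) \<in> borel_measurable G" by (intro f(4)) simp
  have ae: "AE z in G. norm (exp (- u * z)) \<le> 1"
    using f(3) by eventually_elim (use assms(2) in \<open>auto simp: mult_nonneg_nonneg\<close>)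
  have int: "integrable G (\<lambda>z. exp (- u * z))"
    by (rule integrable_const_bound[OF ae meas])
  show "0 \<le> laplace G u" unfolding laplace_def by (rule integral_nonneg_AE) auto
  have "laplace G u \<le> (\<integral>z. 1 \<partial>G)" unfolding laplace_def
    by (rule integral_mono_AE[OF int]) (use ae in auto)
  then show "laplace G u \<le> 1" by (simp add: prob_space)
qed

lemma laplace_0: "prob_dist_nonneg G \<Longrightarrow> laplace G 0 = 1"
  unfolding laplace_def using pdn_facts(1) prob_space.prob_space
  by (simp add: prob_space.emeasure_space_1 measure_def) 

lemma laplace_cont:
  assumes "prob_dist_nonneg G"
  shows "continuous_on {0..} (laplace G)"
proof (rule continuous_on_sequentiallyI)
  note f = pdn_facts[OF assms(1)]
  interpret prob_space G by fact
  fix x a assume x: "\<forall>n. x n \<in> {0::real..}" and a: "a \<in> {0..}" and lim: "x \<longlonglongrightarrow> a"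
  show "(\<lambda>n. laplace G (x n)) \<longlonglongrightarrow> laplace G a"
    unfolding laplace_def
  proof (rule integral_dominated_convergence[where w="\<lambda>_. 1"])
    show "(\<lambda>z. exp (- a * z)) \<in> borel_measurable G" by (intro f(4)) simp
    show "(\<lambda>z. exp (- x i * z)) \<in> borel_measurable G" for i by (intro f(4)) simp
    show "integrable G (\<lambda>_. 1::real)" by simp
    show "AE z in G. (\<lambda>i. exp (- x i * z)) \<longlonglongrightarrow> exp (- a * z)"
      by (intro AE_I2 tendsto_intros lim)
    show "AE z in G. norm (exp (- x i * z)) \<le> 1" for i
      using f(3) by eventually_elim (use x in \<open>auto simp: mult_nonneg_nonneg\<close>)
  qed
qed

lemma conv_lim:
  fixes c :: real and f :: "real \<Rightarrow> real"
  assumes c: "c > 0" and cont: "\<And>b. continuous_on {0..b} f" and lim: "(f \<longlongrightarrow> 0) at_top"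
  shows "((\<lambda>t. exp (- c * t) * integral {0..t} (\<lambda>s. exp (c * s) * f s)) \<longlongrightarrow> 0) at_top"
proof -
  let ?h = "\<lambda>s. exp (c * s) * f s"
  have hc: "continuous_on {0..b} ?h" for b
    by (intro continuous_intros cont)
  have "((\<lambda>t. integral {0..t} ?h / exp (c * t)) \<longlongrightarrow> 0 / c) at_top"
  proof (rule lhospital_at_top_at_top[where g' = "\<lambda>t. c * exp (c * t)" and f' = ?h])
    show "LIM x at_top. exp (c * x) :> at_top" by (rule filterlim_compose[OF exp_at_top filterlim_tendsto_pos_mult_at_top[OF tendsto_const c filterlim_ident]])
    show "\<forall>\<^sub>F x in at_top. c * exp (c * x) \<noteq> 0" using c by simp
    show "\<forall>\<^sub>F x in at_top. ((\<lambda>x. exp (c * x)) has_real_derivative c * exp (c * x)) (at x)"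
      by (intro always_eventually allI) (auto intro!: derivative_eq_intros)
    show "\<forall>\<^sub>F x in at_top. ((\<lambda>t. integral {0..t} ?h) has_real_derivative ?h x) (at x)"
      using eventually_gt_at_top[of 0]
    proof eventually_elim
      case (elim t)
      have "((\<lambda>u. integral {0..u} ?h) has_vector_derivative ?h t) (at t within {0..t+1})"
        by (rule integral_has_vector_derivative[OF hc]) (use elim in auto)
      moreover have "at t within {0..t+1} = at t"
        by (rule at_within_interior) (use elim in auto)
      ultimately show ?case by (simp add: has_real_derivative_iff_has_vector_derivative)
    qed
    have "((\<lambda>x. f x / c) \<longlongrightarrow> 0 / c) at_top" using c by (intro tendsto_intros lim) auto
    then show "((\<lambda>x. ?h x / (c * exp (c * x))) \<longlongrightarrow> 0 / c) at_top"
      using c by simp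
  qed
  then show ?thesis
    by (simp add: exp_minus field_simps mult_minus_left)
qed

definition good :: "(real \<Rightarrow> real) \<Rightarrow> bool" where
  "good g \<longleftrightarrow> (\<forall>u\<ge>0. 0 \<le> g u \<and> g u \<le> 1) \<and> g 0 = 1 \<and> continuous_on {0..} g"

definition inv :: "(real \<Rightarrow> real) \<Rightarrow> bool" where
  "inv a \<longleftrightarrow> (\<forall>t\<ge>0. 0 \<le> a t) \<and> (\<forall>b. continuous_on {0..b} a) \<and> (a \<longlongrightarrow> 0) at_top"

lemma good_laplace: "prob_dist_nonneg G \<Longrightarrow> good (laplace G)"
  unfolding good_def using laplace_bounds laplace_0 laplace_cont by blast

lemma exp_neg_lim: "(d::real) > 0 \<Longrightarrow> ((\<lambda>t. exp (- d * t)) \<longlongrightarrow> 0) at_top"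
proof -
  assume d: "d > 0"
  have "((\<lambda>t. inverse (exp (d * t))) \<longlongrightarrow> 0) at_top"
    by (rule tendsto_inverse_0_at_top, rule filterlim_compose[OF exp_at_top filterlim_tendsto_pos_mult_at_top[OF tendsto_const d filterlim_ident]])
  then show ?thesis by (simp add: exp_minus)
qed

lemma inv_base: "d > 0 \<Longrightarrow> w \<ge> 0 \<Longrightarrow> inv (\<lambda>t. w * exp (- d * t))"
  unfolding inv_def
  using tendsto_mult[OF tendsto_const exp_neg_lim, of d w]
  by (auto intro!: continuous_intros)

lemma gq_cont:
  assumes g: "good g" and a: "inv a"
  shows "continuous_on {0..b} (\<lambda>s. g (a s))"
proof (rule continuous_on_compose2[of "{0..}" g])
  show "continuous_on {0..} g" using g unfolding good_def by auto
  show "continuous_on {0..b} a" using a unfolding inv_def by auto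
  show "a ` {0..b} \<subseteq> {0..}" using a unfolding inv_def by auto
qed

lemma gq_lim:
  assumes g: "good g" and a: "inv a"
  shows "((\<lambda>s. g (a s)) \<longlongrightarrow> 1) at_top"
proof -
  have "continuous (at 0 within {0..}) g" using g unfolding good_def
    by (simp add: continuous_on_eq_continuous_within)
  moreover have "eventually (\<lambda>t. a t \<in> {0..}) at_top"
    using a unfolding inv_def by (auto intro: eventually_mono[OF eventually_ge_at_top[of 0]])
  moreover have "(a \<longlongrightarrow> 0) at_top" using a unfolding inv_def by auto
  ultimately have "((\<lambda>s. g (a s)) \<longlongrightarrow> g 0) at_top" by (rule continuous_within_tendsto_compose)
  then show ?thesis using g unfolding good_def by simp
qed

lemma inv_step:
  assumes d: "d > 0" and w: "w \<ge> 0" and g1: "good g1" and g2: "good g2"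
    and a: "inv a" and b: "inv b"
  shows "inv (\<lambda>t. w * exp (- d * t) + exp (- d * t) *
               integral {0..t} (\<lambda>s. exp (d * s) * ((1 - g1 (b s)) + (1 - g2 (a s)))))"
proof -
  let ?q = "\<lambda>s. (1 - g1 (b s)) + (1 - g2 (a s))"
  let ?h = "\<lambda>s. exp (d * s) * ?q s"
  have qc: "continuous_on {0..c} ?q" for c
    by (intro continuous_on_add continuous_on_diff continuous_on_const gq_cont g1 g2 a b)
  have hc: "continuous_on {0..c} ?h" for c
    by (rule continuous_on_mult[OF _ qc]) (intro continuous_intros)
  have qn: "0 \<le> ?q s" if "s \<ge> 0" for s
    using g1 g2 a b that unfolding good_def inv_def by (smt (verit))
  have ql: "(?q \<longlongrightarrow> 0) at_top"
    using tendsto_add[OF tendsto_diff[OF tendsto_const gq_lim[OF g1 b]] tendsto_diff[OF tendsto_const gq_lim[OF g2 a]], of 1 1]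
    by simp
  have nn: "0 \<le> integral {0..t} ?h" for t
  proof (rule integral_nonneg)
    show "?h integrable_on {0..t}" by (rule integrable_continuous_interval[OF hc])
    show "0 \<le> ?h x" if "x \<in> {0..t}" for x using qn that by auto
  qed
  show ?thesis unfolding inv_def
  proof (intro conjI allI impI)
    fix t :: real assume "0 \<le> t"
    show "0 \<le> w * exp (- d * t) + exp (- d * t) * integral {0..t} ?h"
      using w nn[of t] by simp
  next
    fix c :: real
    have "continuous_on {0..c} (\<lambda>t. integral {0..t} ?h)"
      by (rule indefinite_integral_continuous_1[OF integrable_continuous_interval[OF hc]])
    then show "continuous_on {0..c} (\<lambda>t. w * exp (- d * t) + exp (- d * t) * integral {0..t} ?h)"
      by (intro continuous_intros)
  next
    have l1: "((\<lambda>t. w * exp (- d * t)) \<longlongrightarrow> 0) at_top"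
      using tendsto_mult[OF tendsto_const exp_neg_lim, of d w] d by simp
    have l2: "((\<lambda>t. exp (- d * t) * integral {0..t} ?h) \<longlongrightarrow> 0) at_top"
      by (rule conv_lim[OF d qc ql])
    show "((\<lambda>t. w * exp (- d * t) + exp (- d * t) * integral {0..t} ?h) \<longlongrightarrow> 0) at_top"
      using tendsto_add[OF l1 l2] by simp
  qed
qed

lemma inv_all:
  assumes d1: "d1 > 0" and d2: "d2 > 0" and g: "good g11" "good g12" "good g21" "good g22"
    and v: "\<forall>j\<in>{1..2*n}. v j \<ge> 0" and n: "n \<ge> 1"
  shows "k < n \<Longrightarrow> inv (fst (lpair n v d1 d2 g11 g12 g21 g22 k)) \<and> inv (snd (lpair n v d1 d2 g11 g12 g21 g22 k))"
proof (induction k)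
  case 0
  have "v (2*n) \<ge> 0" "v (2*n - 1) \<ge> 0" using v n by auto
  then show ?case using inv_base d1 d2 by simp
next
  case (Suc k)
  then have IH: "inv (fst (lpair n v d1 d2 g11 g12 g21 g22 k))" "inv (snd (lpair n v d1 d2 g11 g12 g21 g22 k))" by auto
  have "2*(n - Suc k) \<in> {1..2*n}" "2*(n - Suc k) - 1 \<in> {1..2*n}" using Suc.prems by auto
  then have "v (2*(n - Suc k)) \<ge> 0" "v (2*(n - Suc k) - 1) \<ge> 0" using v by blast+
  then show ?case using inv_step[OF d2 _ g(2) g(4) IH(1) IH(2)] inv_step[OF d1 _ g(1) g(3) IH(1) IH(2)]
    by (simp add: Let_def)
qed

theorem mainTheorem1:
  fixes n :: nat and d1 d2 :: real and G11 G12 G21 G22 :: "real measure"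
    and v :: "nat \<Rightarrow> real" and i :: nat
  assumes "n \<ge> 1"
    and "d1 > 0" and "d2 > 0"
    and "prob_dist_nonneg G11" and "prob_dist_nonneg G12"
    and "prob_dist_nonneg G21" and "prob_dist_nonneg G22"
    and "\<forall>j\<in>{1..2*n}. v j \<ge> 0"
    and "i \<in> {1..2*n}"
  shows "(lfun n v d1 d2 (laplace G11) (laplace G12) (laplace G21) (laplace G22) i
           \<longlongrightarrow> 0) at_top"
proof -
  note IA = inv_all[OF assms(2,3) good_laplace[OF assms(4)] good_laplace[OF assms(5)]
      good_laplace[OF assms(6)] good_laplace[OF assms(7)] assms(8) assms(1)]
  show ?thesis
  proof (cases "odd i")
    case True
    have "(i - 1) div 2 < n" using assms(9) by auto
    from IA[OF this] True show ?thesis unfolding lfun_def inv_def by simp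
  next
    case False
    have "(i - 2) div 2 < n" using assms(9) by auto
    from IA[OF this] False show ?thesis unfolding lfun_def inv_def by simp
  qed
qed

end
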